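(* Let $n$ be even and let $G=D_n$ be the dihedral group of order $2n$. Let $H\le G$ be a subgroup isomorphic to a dihedral group, of index $2$ in $G$, and whose order is divisible by $4$. Then the restriction map $\operatorname{Res}:H^3(G,\mathbb{Z})\to H^3(H,\mathbb{Z})$ is injective.
   Context: $D_n=\langle r,s\mid r^n=s^2=e,\ srs=r^{-1}\rangle$. $\mathbb{Z}$ is the trivial $G$-module. *)

theory Defs
  imports "HOL-Algebra.Algebra"
begin

text \<open>Concrete model of the dihedral group D_n of order 2n:
  the pair (a, b) stands for r^a s^b with 0 <= a < n, where b = True means the factor s is present.
  Using s r^c = r^(-c) s we get (r^a s^b)(r^c s^d) = r^(a + (if b then -c else c)) s^(b+d).\<close>
definition dihedral_group :: "nat \<Rightarrow> (nat \<times> bool) monoid" where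
  "dihedral_group n =
     \<lparr> carrier = {0..<n} \<times> (UNIV :: bool set),
       monoid.mult = (\<lambda>(a, b) (c, d). ((if b then a + n - c else a + c) mod n, b \<noteq> d)),
       monoid.one = (0, False) \<rparr>"

text \<open>Inhomogeneous (bar-resolution) cochains of G with values in the trivial module Z:
  a k-cochain is a function on lists of length k of elements of carrier G.\<close>
definition cobdry :: "('a, 'b) monoid_scheme \<Rightarrow> nat \<Rightarrow> ('a list \<Rightarrow> int) \<Rightarrow> 'a list \<Rightarrow> int" where
  "cobdry G k f xs =
     f (tl xs)
     + (\<Sum>i\<in>{1..k}. (-1) ^ i * f (take (i - 1) xs @ [xs ! (i - 1) \<otimes>\<^bsub>G\<^esub> xs ! i] @ drop (i + 1) xs))
     + (-1) ^ (k + 1) * f (take k xs)"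

definition cocycle :: "('a, 'b) monoid_scheme \<Rightarrow> nat \<Rightarrow> ('a list \<Rightarrow> int) \<Rightarrow> bool" where
  "cocycle G k f \<longleftrightarrow>
     (\<forall>xs. set xs \<subseteq> carrier G \<and> length xs = Suc k \<longrightarrow> cobdry G k f xs = 0)"

definition is_coboundary :: "('a, 'b) monoid_scheme \<Rightarrow> nat \<Rightarrow> ('a list \<Rightarrow> int) \<Rightarrow> bool" where
  "is_coboundary G k f \<longleftrightarrow>
     (\<exists>h. \<forall>xs. set xs \<subseteq> carrier G \<and> length xs = Suc k \<longrightarrow> f xs = cobdry G k h xs)"

text \<open>Two (k+1)-cochains represent the same class in H^(k+1)(G,Z).\<close>
definition cohomologous :: "('a, 'b) monoid_scheme \<Rightarrow> nat \<Rightarrow> ('a list \<Rightarrow> int) \<Rightarrow> ('a list \<Rightarrow> int) \<Rightarrow> bool" where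
  "cohomologous G k f g \<longleftrightarrow> is_coboundary G k (\<lambda>xs. f xs - g xs)"

end

theory Submission
  imports Defs
begin


lemma dmult: "(a,b) \<otimes>\<^bsub>dihedral_group n\<^esub> (c,d) = ((if b then a + n - c else a + c) mod n, b \<noteq> d)"
  by (simp add: dihedral_group_def)
lemma dcarrier: "carrier (dihedral_group n) = {0..<n} \<times> UNIV" by (simp add: dihedral_group_def)
lemma d_one: "\<one>\<^bsub>dihedral_group n\<^esub> = (0, False)" by (simp add: dihedral_group_def)

lemma int_fst_mult:
  assumes "c < n"
  shows "int (fst ((a,b) \<otimes>\<^bsub>dihedral_group n\<^esub> (c,d))) = (if b then int a - int c else int a + int c) mod int n"
proof -
  have "int ((a + n - c) mod n) = (int a - int c) mod int n"
  proof -
    have "int ((a + n - c) mod n) = (int a + int n - int c) mod int n" using assms by (simp add: zmod_int of_nat_diff)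
    also have "\<dots> = (int a - int c) mod int n"
      by (metis add.commute add_diff_eq mod_add_self1)
    finally show ?thesis .
  qed
  then show ?thesis by (simp add: dmult zmod_int)
qed

lemma dgroup: assumes "n > 0" shows "group (dihedral_group n)"
proof (rule groupI)
  let ?G = "dihedral_group n"
  show "\<And>x y. x \<in> carrier ?G \<Longrightarrow> y \<in> carrier ?G \<Longrightarrow> x \<otimes>\<^bsub>?G\<^esub> y \<in> carrier ?G"
    using assms by (auto simp: dmult dcarrier)
  show "\<one>\<^bsub>?G\<^esub> \<in> carrier ?G" using assms by (simp add: d_one dcarrier)
  show "\<And>x. x \<in> carrier ?G \<Longrightarrow> \<one>\<^bsub>?G\<^esub> \<otimes>\<^bsub>?G\<^esub> x = x"
    by (auto simp: dmult dcarrier d_one)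
  show "\<exists>y\<in>carrier ?G. y \<otimes>\<^bsub>?G\<^esub> x = \<one>\<^bsub>?G\<^esub>" if xG: "x \<in> carrier ?G" for x
  proof -
    obtain a b where x: "x = (a,b)" "a < n" using xG by (cases x) (auto simp: dcarrier)
    show ?thesis
    proof (cases b)
      case True
      then show ?thesis using x by (intro bexI[of _ "(a,True)"]) (auto simp: dmult d_one dcarrier)
    next
      case False
      then show ?thesis using x assms
        by (intro bexI[of _ "((n - a) mod n,False)"]) (auto simp: dmult d_one dcarrier mod_add_left_eq)
    qed
  qed
  show "(x \<otimes>\<^bsub>?G\<^esub> y) \<otimes>\<^bsub>?G\<^esub> z = x \<otimes>\<^bsub>?G\<^esub> (y \<otimes>\<^bsub>?G\<^esub> z)"
    if xyz: "x \<in> carrier ?G" "y \<in> carrier ?G" "z \<in> carrier ?G" for x y z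
  proof -
    obtain a b where x: "x = (a,b)" "a < n" using xyz by (cases x) (auto simp: dcarrier)
    obtain c d where y: "y = (c,d)" "c < n" using xyz by (cases y) (auto simp: dcarrier)
    obtain e f where z: "z = (e,f)" "e < n" using xyz by (cases z) (auto simp: dcarrier)
    have n0: "n > 0" by fact
    let ?p = "(a,b) \<otimes>\<^bsub>?G\<^esub> (c,d)" and ?q = "(c,d) \<otimes>\<^bsub>?G\<^esub> (e,f)"
    have p: "?p = (fst ?p, b \<noteq> d)" and q: "?q = (fst ?q, d \<noteq> f)" by (simp_all add: dmult)
    have pl: "fst ?p < n" "fst ?q < n" using n0 by (simp_all add: dmult)
    have e1: "int (fst (?p \<otimes>\<^bsub>?G\<^esub> (e,f))) = (if b \<noteq> d then int (fst ?p) - int e else int (fst ?p) + int e) mod int n"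
      by (subst p) (rule int_fst_mult[OF z(2)])
    have e2: "int (fst ?p) = (if b then int a - int c else int a + int c) mod int n" by (rule int_fst_mult[OF y(2)])
    have e3: "int (fst ((a,b) \<otimes>\<^bsub>?G\<^esub> ?q)) = (if b then int a - int (fst ?q) else int a + int (fst ?q)) mod int n"
      by (subst q) (rule int_fst_mult[OF pl(2)])
    have e4: "int (fst ?q) = (if d then int c - int e else int c + int e) mod int n" by (rule int_fst_mult[OF z(2)])
    have "int (fst (?p \<otimes>\<^bsub>?G\<^esub> (e,f))) = int (fst ((a,b) \<otimes>\<^bsub>?G\<^esub> ?q))"
      unfolding e1 e3 e2 e4
      by (cases b; cases d; simp add: mod_simps algebra_simps)
    then have "fst (?p \<otimes>\<^bsub>?G\<^esub> (e,f)) = fst ((a,b) \<otimes>\<^bsub>?G\<^esub> ?q)" by simp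
    moreover have "snd (?p \<otimes>\<^bsub>?G\<^esub> (e,f)) = snd ((a,b) \<otimes>\<^bsub>?G\<^esub> ?q)" by (simp add: dmult) blast
    ultimately show ?thesis unfolding x(1) y(1) z(1) by (simp add: prod_eq_iff)
  qed
qed

lemma rpow: "n > 1 \<Longrightarrow> (1::nat, False) [^]\<^bsub>dihedral_group n\<^esub> (k::nat) = (k mod n, False)"
proof (induction k)
  case 0 then show ?case by (simp add: d_one)
next
  case (Suc k)
  have "(1::nat, False) [^]\<^bsub>dihedral_group n\<^esub> Suc k = (k mod n, False) \<otimes>\<^bsub>dihedral_group n\<^esub> (1, False)"
    using Suc by simp
  also have "\<dots> = ((k mod n + 1) mod n, False)" by (simp add: dmult)
  also have "(k mod n + 1) mod n = Suc k mod n" by (simp add: mod_Suc_eq)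
  finally show ?case .
qed



lemma cob2: "cobdry G 2 f [x,y,z] = f [y,z] - f [x \<otimes>\<^bsub>G\<^esub> y, z] + f [x, y \<otimes>\<^bsub>G\<^esub> z] - f [x,y]"
  by (simp add: cobdry_def numeral_2_eq_2)

lemma cob3: "cobdry G 3 f [w,x,y,z] = f [x,y,z] - f [w \<otimes>\<^bsub>G\<^esub> x,y,z] + f [w, x \<otimes>\<^bsub>G\<^esub> y, z] - f [w,x,y \<otimes>\<^bsub>G\<^esub> z] + f [w,x,y]"
  by (simp add: cobdry_def numeral_3_eq_3)

lemma sum_translate:
  fixes K (structure)
  assumes "group K" "y \<in> carrier K"
  shows "(\<Sum>g\<in>carrier K. F (y \<otimes> g)) = (\<Sum>g\<in>carrier K. F g)"
proof -
  interpret group K by fact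
  have "bij_betw (\<lambda>g. y \<otimes> g) (carrier K) (carrier K)"
    unfolding bij_betw_def
  proof
    show "inj_on ((\<otimes>) y) (carrier K)" using assms(2) by (auto intro!: inj_onI)
    show "(\<otimes>) y ` carrier K = carrier K"
    proof
      show "(\<otimes>) y ` carrier K \<subseteq> carrier K" using assms(2) by auto
      show "carrier K \<subseteq> (\<otimes>) y ` carrier K"
      proof
        fix g assume g: "g \<in> carrier K"
        then have "g = y \<otimes> (inv y \<otimes> g)" using assms(2) by (simp add: m_assoc[symmetric])
        then show "g \<in> (\<otimes>) y ` carrier K" using g assms(2) by blast
      qed
    qed
  qed
  then show ?thesis by (rule sum.reindex_bij_betw)
qed

lemma avg3:
  fixes K (structure) and \<phi> :: "'a list \<Rightarrow> int"
  assumes "group K" "finite (carrier K)"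
    and coc: "\<And>w x y z. w \<in> carrier K \<Longrightarrow> x \<in> carrier K \<Longrightarrow> y \<in> carrier K \<Longrightarrow> z \<in> carrier K \<Longrightarrow>
        \<phi> [x,y,z] - \<phi> [w \<otimes> x,y,z] + \<phi> [w, x \<otimes> y, z] - \<phi> [w,x,y \<otimes> z] + \<phi> [w,x,y] = 0"
    and th: "\<And>xs. \<theta> xs = - (\<Sum>g\<in>carrier K. (of_int (\<phi> (xs @ [g])) :: rat)) / of_nat (card (carrier K))"
    and xyz: "x \<in> carrier K" "y \<in> carrier K" "z \<in> carrier K"
  shows "\<theta> [y,z] - \<theta> [x \<otimes> y,z] + \<theta> [x, y \<otimes> z] - \<theta> [x,y] = of_int (\<phi> [x,y,z])"
proof -
  interpret group K by fact
  let ?N = "of_nat (card (carrier K)) :: rat"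
  have N0: "?N \<noteq> 0" using assms(2) one_closed by (auto simp: card_eq_0_iff)
  define S where "S xs = (\<Sum>g\<in>carrier K. (of_int (\<phi> (xs @ [g])) :: rat))" for xs
  have "(\<Sum>g\<in>carrier K. (of_int (\<phi> [y,z,g] - \<phi> [x \<otimes> y,z,g] + \<phi> [x, y \<otimes> z, g] - \<phi> [x,y,z \<otimes> g] + \<phi> [x,y,z]) :: rat)) = 0"
    using coc xyz by (intro sum.neutral) simp
  then have "S [y,z] - S [x \<otimes> y,z] + S [x, y \<otimes> z] - (\<Sum>g\<in>carrier K. (of_int (\<phi> [x,y,z \<otimes> g]) :: rat)) + ?N * of_int (\<phi> [x,y,z]) = 0"
    by (simp add: S_def sum.distrib sum_subtractf)
  moreover have "(\<Sum>g\<in>carrier K. (of_int (\<phi> [x,y,z \<otimes> g]) :: rat)) = S [x,y]"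
    unfolding S_def using sum_translate[OF assms(1) xyz(3), of "\<lambda>g. (of_int (\<phi> [x,y,g]) :: rat)"] by simp
  ultimately have "S [y,z] - S [x \<otimes> y,z] + S [x, y \<otimes> z] - S [x,y] = - ?N * of_int (\<phi> [x,y,z])" by simp
  moreover have thN: "\<And>xs. ?N * \<theta> xs = - S xs" using th S_def N0 by simp
  ultimately have "?N * (\<theta> [y,z] - \<theta> [x \<otimes> y,z] + \<theta> [x, y \<otimes> z] - \<theta> [x,y]) = ?N * of_int (\<phi> [x,y,z])"
    by (simp add: algebra_simps thN)
  then show ?thesis using N0 by simp
qed

lemma avg2:
  fixes K (structure) and c :: "'a list \<Rightarrow> rat"
  assumes "group K" "finite (carrier K)"
    and coc: "\<And>x y z. x \<in> carrier K \<Longrightarrow> y \<in> carrier K \<Longrightarrow> z \<in> carrier K \<Longrightarrow>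
        c [y,z] - c [x \<otimes> y,z] + c [x, y \<otimes> z] - c [x,y] = 0"
    and ab: "a \<in> carrier K" "b \<in> carrier K" "a \<otimes> b = b \<otimes> a"
  shows "c [a,b] = c [b,a]"
proof -
  interpret group K by fact
  let ?N = "of_nat (card (carrier K)) :: rat"
  have N0: "?N \<noteq> 0" using assms(2) one_closed by (auto simp: card_eq_0_iff)
  define \<mu> where "\<mu> x = (\<Sum>g\<in>carrier K. c [x,g])" for x
  have key: "\<mu> y - \<mu> (x \<otimes> y) + \<mu> x = ?N * c [x,y]" if xy: "x \<in> carrier K" "y \<in> carrier K" for x y
  proof -
    have "(\<Sum>g\<in>carrier K. c [y,g] - c [x \<otimes> y,g] + c [x, y \<otimes> g] - c [x,y]) = 0"
      using coc xy by (intro sum.neutral) simp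
    then have "\<mu> y - \<mu> (x \<otimes> y) + (\<Sum>g\<in>carrier K. c [x, y \<otimes> g]) - ?N * c [x,y] = 0"
      by (simp add: \<mu>_def sum.distrib sum_subtractf)
    moreover have "(\<Sum>g\<in>carrier K. c [x, y \<otimes> g]) = \<mu> x"
      unfolding \<mu>_def using sum_translate[OF assms(1) xy(2), of "\<lambda>g. c [x,g]"] by simp
    ultimately show ?thesis by simp
  qed
  have "?N * c [a,b] = ?N * c [b,a]" using key[OF ab(1,2)] key[OF ab(2,1)] unfolding ab(3) by linarith
  then show ?thesis using N0 by simp
qed



locale extn =
  fixes G :: "('a, 'b) monoid_scheme" and t :: "'a \<Rightarrow> 'a \<Rightarrow> rat"
  assumes grp: "group G"
    and t1: "\<And>y. y \<in> carrier G \<Longrightarrow> t \<one>\<^bsub>G\<^esub> y \<in> \<int>"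
    and t2: "\<And>x. x \<in> carrier G \<Longrightarrow> t x \<one>\<^bsub>G\<^esub> \<in> \<int>"
    and tc: "\<And>x y z. x \<in> carrier G \<Longrightarrow> y \<in> carrier G \<Longrightarrow> z \<in> carrier G \<Longrightarrow>
              t x y + t (x \<otimes>\<^bsub>G\<^esub> y) z - t y z - t x (y \<otimes>\<^bsub>G\<^esub> z) \<in> \<int>"
begin

definition EE :: "(rat \<times> 'a) monoid" where
  "EE = \<lparr> carrier = {0..<1} \<times> carrier G,
         monoid.mult = (\<lambda>(p,x) (q,y). (frac (p + q + t x y), x \<otimes>\<^bsub>G\<^esub> y)),
         monoid.one = (0, \<one>\<^bsub>G\<^esub>) \<rparr>"

definition zz :: "rat \<Rightarrow> rat \<times> 'a" where "zz q = (frac q, \<one>\<^bsub>G\<^esub>)"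

lemma carrierE: "carrier EE = {0..<1} \<times> carrier G" by (simp add: EE_def)
lemma oneE: "\<one>\<^bsub>EE\<^esub> = (0, \<one>\<^bsub>G\<^esub>)" by (simp add: EE_def)
lemma multE: "u \<otimes>\<^bsub>EE\<^esub> v = (frac (fst u + fst v + t (snd u) (snd v)), snd u \<otimes>\<^bsub>G\<^esub> snd v)"
  by (simp add: EE_def case_prod_beta)

lemma frac_eq_intdiff: "a - b \<in> \<int> \<Longrightarrow> frac a = frac (b::rat)"
  by (metis diff_add_cancel frac_add_int_left)

lemma fr1: "frac (frac a + c + b) = frac (a + c + (b::rat))"
proof (rule frac_eq_intdiff)
  have "frac a + c + b - (a + c + b) = - of_int (floor a)" by (simp add: frac_def)
  then show "frac a + c + b - (a + c + b) \<in> \<int>" by simp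
qed

lemma fr2: "frac (c + frac a + b) = frac (c + a + (b::rat))"
proof (rule frac_eq_intdiff)
  have "c + frac a + b - (c + a + b) = - of_int (floor a)" by (simp add: frac_def)
  then show "c + frac a + b - (c + a + b) \<in> \<int>" by simp
qed

lemma E_group: "group EE"
proof (rule groupI)
  interpret G: group G by (rule grp)
  show "\<And>x y. x \<in> carrier EE \<Longrightarrow> y \<in> carrier EE \<Longrightarrow> x \<otimes>\<^bsub>EE\<^esub> y \<in> carrier EE"
    by (auto simp: carrierE multE frac_lt_1)
  show "\<one>\<^bsub>EE\<^esub> \<in> carrier EE" by (simp add: carrierE oneE)
  show "\<one>\<^bsub>EE\<^esub> \<otimes>\<^bsub>EE\<^esub> x = x" if "x \<in> carrier EE" for x
    using that t1[of "snd x"] by (auto simp: carrierE oneE multE frac_add_int_right)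
  show "(x \<otimes>\<^bsub>EE\<^esub> y) \<otimes>\<^bsub>EE\<^esub> z = x \<otimes>\<^bsub>EE\<^esub> (y \<otimes>\<^bsub>EE\<^esub> z)"
    if xyz: "x \<in> carrier EE" "y \<in> carrier EE" "z \<in> carrier EE" for x y z
  proof -
    have g: "snd x \<in> carrier G" "snd y \<in> carrier G" "snd z \<in> carrier G" using xyz by (auto simp: carrierE)
    have "frac (frac (fst x + fst y + t (snd x) (snd y)) + fst z + t (snd x \<otimes>\<^bsub>G\<^esub> snd y) (snd z))
        = frac (fst x + frac (fst y + fst z + t (snd y) (snd z)) + t (snd x) (snd y \<otimes>\<^bsub>G\<^esub> snd z))"
    proof -
      have "frac (frac (fst x + fst y + t (snd x) (snd y)) + fst z + t (snd x \<otimes>\<^bsub>G\<^esub> snd y) (snd z))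
          = frac (fst x + fst y + t (snd x) (snd y) + fst z + t (snd x \<otimes>\<^bsub>G\<^esub> snd y) (snd z))"
        by (rule fr1)
      also have "\<dots> = frac (fst x + (fst y + fst z + t (snd y) (snd z)) + t (snd x) (snd y \<otimes>\<^bsub>G\<^esub> snd z))"
      proof (rule frac_eq_intdiff)
        let ?a = "t (snd x) (snd y)" and ?b = "t (snd x \<otimes>\<^bsub>G\<^esub> snd y) (snd z)" and ?c = "t (snd y) (snd z)" and ?d = "t (snd x) (snd y \<otimes>\<^bsub>G\<^esub> snd z)"
        have eqd: "fst x + fst y + ?a + fst z + ?b - (fst x + (fst y + fst z + ?c) + ?d) = ?a + ?b - ?c - ?d" by linarith
        show "fst x + fst y + ?a + fst z + ?b - (fst x + (fst y + fst z + ?c) + ?d) \<in> \<int>" unfolding eqd by (rule tc[OF g])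
      qed
      also have "\<dots> = frac (fst x + frac (fst y + fst z + t (snd y) (snd z)) + t (snd x) (snd y \<otimes>\<^bsub>G\<^esub> snd z))"
        by (rule fr2[symmetric])
      finally show ?thesis .
    qed
    then show ?thesis using g by (simp add: multE G.m_assoc)
  qed
  show "\<exists>y\<in>carrier EE. y \<otimes>\<^bsub>EE\<^esub> x = \<one>\<^bsub>EE\<^esub>" if x: "x \<in> carrier EE" for x
  proof -
    have g: "snd x \<in> carrier G" using x by (auto simp: carrierE)
    let ?y = "(frac (- fst x - t (inv\<^bsub>G\<^esub> snd x) (snd x)), inv\<^bsub>G\<^esub> snd x)"
    have "?y \<in> carrier EE" using g by (simp add: carrierE frac_lt_1)
    moreover have "?y \<otimes>\<^bsub>EE\<^esub> x = \<one>\<^bsub>EE\<^esub>"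
      using g by (simp add: multE oneE fr1)
    ultimately show ?thesis by blast
  qed
qed

lemma Gone: "\<one>\<^bsub>G\<^esub> \<in> carrier G" using grp by (simp add: group.is_monoid monoid.one_closed)
lemma Glone: "x \<in> carrier G \<Longrightarrow> \<one>\<^bsub>G\<^esub> \<otimes>\<^bsub>G\<^esub> x = x" using grp by (simp add: group.is_monoid monoid.l_one)
lemma Grone: "x \<in> carrier G \<Longrightarrow> x \<otimes>\<^bsub>G\<^esub> \<one>\<^bsub>G\<^esub> = x" using grp by (simp add: group.is_monoid monoid.r_one)

lemma snd_mult: "snd (u \<otimes>\<^bsub>EE\<^esub> v) = snd u \<otimes>\<^bsub>G\<^esub> snd v" by (simp add: multE)

lemma snd_pow: "u \<in> carrier EE \<Longrightarrow> snd (u [^]\<^bsub>EE\<^esub> (k::nat)) = snd u [^]\<^bsub>G\<^esub> k"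
  by (induction k) (simp_all add: oneE snd_mult)

lemma zz_carrier [simp]: "zz q \<in> carrier EE"
  using Gone by (simp add: zz_def carrierE frac_lt_1)

lemma t11: "t \<one>\<^bsub>G\<^esub> \<one>\<^bsub>G\<^esub> \<in> \<int>" using t1 Gone by blast

lemma zz_mult: "zz a \<otimes>\<^bsub>EE\<^esub> zz b = zz (a + b)"
  using t11 Gone Glone[OF Gone] by (simp add: zz_def multE frac_add_int_right)

lemma zz_int: "q \<in> \<int> \<Longrightarrow> zz q = \<one>\<^bsub>EE\<^esub>" by (simp add: zz_def oneE)

lemma zz_eq_one: "zz q = \<one>\<^bsub>EE\<^esub> \<Longrightarrow> q \<in> \<int>" by (simp add: zz_def oneE)

lemma zz_left: "u \<in> carrier EE \<Longrightarrow> zz q \<otimes>\<^bsub>EE\<^esub> u = (frac (q + fst u), snd u)"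
  using t1[of "snd u"] Glone[of "snd u"] by (auto simp: zz_def multE carrierE frac_add_int_right)

lemma zz_right: "u \<in> carrier EE \<Longrightarrow> u \<otimes>\<^bsub>EE\<^esub> zz q = (frac (fst u + q), snd u)"
  using t2[of "snd u"] Grone[of "snd u"] by (auto simp: zz_def multE carrierE frac_add_int_right)

lemma zz_central: "u \<in> carrier EE \<Longrightarrow> zz q \<otimes>\<^bsub>EE\<^esub> u = u \<otimes>\<^bsub>EE\<^esub> zz q"
  by (simp add: zz_left zz_right add.commute)

lemma lift_eq: "u \<in> carrier EE \<Longrightarrow> v \<in> carrier EE \<Longrightarrow> snd u = snd v \<Longrightarrow> u = v \<otimes>\<^bsub>EE\<^esub> zz (fst u - fst v)"
  by (auto simp: zz_right carrierE prod_eq_iff)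

lemma zz_pow: "zz q [^]\<^bsub>EE\<^esub> (k::nat) = zz (of_nat k * q)"
proof (induction k)
  case 0 then show ?case by (simp add: zz_int)
next
  case (Suc k) then show ?case by (simp add: zz_mult algebra_simps)
qed

lemma lift_comm:
  assumes "u \<in> carrier EE" "v \<in> carrier EE" "snd u \<otimes>\<^bsub>G\<^esub> snd v = snd v \<otimes>\<^bsub>G\<^esub> snd u"
    "t (snd u) (snd v) - t (snd v) (snd u) \<in> \<int>"
  shows "u \<otimes>\<^bsub>EE\<^esub> v = v \<otimes>\<^bsub>EE\<^esub> u"
proof -
  have "frac (fst u + fst v + t (snd u) (snd v)) = frac (fst v + fst u + t (snd v) (snd u))"
  proof (rule frac_eq_intdiff)
    have eqd: "fst u + fst v + t (snd u) (snd v) - (fst v + fst u + t (snd v) (snd u)) = t (snd u) (snd v) - t (snd v) (snd u)" by linarith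
    show "fst u + fst v + t (snd u) (snd v) - (fst v + fst u + t (snd v) (snd u)) \<in> \<int>" unfolding eqd by (rule assms(4))
  qed
  then show ?thesis using assms(3) by (simp add: multE)
qed

end


lemma (in group) pow_mod_n:
  assumes "R \<in> carrier G" "R [^] (n::nat) = \<one>"
  shows "R [^] k = R [^] (k mod n)"
proof -
  have "R [^] (n * (k div n)) \<otimes> R [^] (k mod n) = R [^] (n * (k div n) + k mod n)"
    using assms(1) by (rule nat_pow_mult)
  moreover have "R [^] (n * (k div n)) = (R [^] n) [^] (k div n)" using assms(1) by (simp add: nat_pow_pow)
  ultimately show ?thesis using assms by simp
qed

lemma (in group) conj_pow:
  assumes "S \<in> carrier G" "x \<in> carrier G" "S \<otimes> S = \<one>"
  shows "S \<otimes> x [^] (k::nat) \<otimes> S = (S \<otimes> x \<otimes> S) [^] k"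
proof (induction k)
  case 0 then show ?case using assms by simp
next
  case (Suc k)
  have SSy: "\<And>y. y \<in> carrier G \<Longrightarrow> S \<otimes> (S \<otimes> y) = y" using assms by (simp add: m_assoc[symmetric])
  have "(S \<otimes> x [^] k \<otimes> S) \<otimes> (S \<otimes> x \<otimes> S) = S \<otimes> x [^] k \<otimes> (S \<otimes> S) \<otimes> x \<otimes> S"
    using assms by (simp add: m_assoc SSy)
  then have "S \<otimes> x [^] Suc k \<otimes> S = (S \<otimes> x [^] k \<otimes> S) \<otimes> (S \<otimes> x \<otimes> S)"
    using assms by (simp add: m_assoc)
  then show ?case using Suc by simp
qed

lemma (in group) dihedral_hom:
  assumes n0: "n > 0" and RS: "R \<in> carrier G" "S \<in> carrier G"
    and Rn: "R [^] n = \<one>" and SS: "S \<otimes> S = \<one>" and SRSR: "S \<otimes> R \<otimes> S \<otimes> R = \<one>"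
    and x: "x \<in> carrier (dihedral_group n)" and y: "y \<in> carrier (dihedral_group n)"
  shows "(\<lambda>(a,b). if b then R [^] a \<otimes> S else R [^] a) (x \<otimes>\<^bsub>dihedral_group n\<^esub> y)
       = (\<lambda>(a,b). if b then R [^] a \<otimes> S else R [^] a) x \<otimes> (\<lambda>(a,b). if b then R [^] a \<otimes> S else R [^] a) y"
proof -
  obtain a b where xab: "x = (a,b)" "a < n" using x by (cases x) (auto simp: dcarrier)
  obtain c d where ycd: "y = (c,d)" "c < n" using y by (cases y) (auto simp: dcarrier)
  have pm: "R [^] k = R [^] (k mod n)" for k by (rule pow_mod_n[OF RS(1) Rn])
  have SRS: "S \<otimes> R \<otimes> S = inv R"
  proof -
    have "S \<otimes> R \<otimes> S = (S \<otimes> R \<otimes> S \<otimes> R) \<otimes> inv R" using RS by (simp add: m_assoc)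
    then show ?thesis using SRSR RS by simp
  qed
  have inv_c: "inv (R [^] c) = R [^] (n - c)"
  proof -
    have "R [^] (n - c) \<otimes> R [^] c = \<one>" using RS ycd(2) Rn by (simp add: nat_pow_mult)
    then show ?thesis using RS by (intro inv_equality) simp_all
  qed
  have SRcS: "S \<otimes> R [^] c \<otimes> S = R [^] (n - c)"
    using conj_pow[OF RS(2) RS(1) SS, of c] SRS inv_c RS by (simp add: nat_pow_inv)
  have SRc: "S \<otimes> R [^] c = R [^] (n - c) \<otimes> S"
  proof -
    have "S \<otimes> R [^] c = S \<otimes> R [^] c \<otimes> S \<otimes> S" using RS SS by (simp add: m_assoc)
    then show ?thesis using SRcS by simp
  qed
  have ex1: "R [^] ((a + c) mod n) = R [^] a \<otimes> R [^] c" using RS by (simp add: pm[symmetric] nat_pow_mult)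
  have ex2: "R [^] ((a + n - c) mod n) = R [^] a \<otimes> R [^] (n - c)"
  proof -
    have "a + n - c = a + (n - c)" using ycd(2) by simp
    then show ?thesis using RS by (simp add: pm[symmetric] nat_pow_mult)
  qed
  show ?thesis
  proof (cases b)
    case True
    show ?thesis
    proof (cases d)
      case True
      with \<open>b\<close> show ?thesis using xab ycd RS ex2 SRcS by (simp add: dmult m_assoc)
    next
      case False
      with \<open>b\<close> show ?thesis using xab ycd RS ex2 SRc by (simp add: dmult m_assoc)
    qed
  next
    case False
    then show ?thesis using xab ycd RS ex1 by (cases d) (simp_all add: dmult m_assoc)
  qed
qed



context extn begin

lemma mz: "u \<in> carrier EE \<Longrightarrow> v \<in> carrier EE \<Longrightarrow>
   (u \<otimes>\<^bsub>EE\<^esub> zz a) \<otimes>\<^bsub>EE\<^esub> (v \<otimes>\<^bsub>EE\<^esub> zz b) = (u \<otimes>\<^bsub>EE\<^esub> v) \<otimes>\<^bsub>EE\<^esub> zz (a + b)"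
proof -
  interpret E: group EE by (rule E_group)
  assume uv: "u \<in> carrier EE" "v \<in> carrier EE"
  have "(u \<otimes>\<^bsub>EE\<^esub> zz a) \<otimes>\<^bsub>EE\<^esub> (v \<otimes>\<^bsub>EE\<^esub> zz b) = u \<otimes>\<^bsub>EE\<^esub> (zz a \<otimes>\<^bsub>EE\<^esub> v) \<otimes>\<^bsub>EE\<^esub> zz b"
    using uv by (simp add: E.m_assoc)
  also have "\<dots> = u \<otimes>\<^bsub>EE\<^esub> (v \<otimes>\<^bsub>EE\<^esub> zz a) \<otimes>\<^bsub>EE\<^esub> zz b" using uv zz_central[OF uv(2), of a] by simp
  also have "\<dots> = (u \<otimes>\<^bsub>EE\<^esub> v) \<otimes>\<^bsub>EE\<^esub> (zz a \<otimes>\<^bsub>EE\<^esub> zz b)" using uv by (simp add: E.m_assoc)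
  finally show ?thesis by (simp add: zz_mult)
qed

lemma pz: "u \<in> carrier EE \<Longrightarrow> (u \<otimes>\<^bsub>EE\<^esub> zz a) [^]\<^bsub>EE\<^esub> (k::nat) = u [^]\<^bsub>EE\<^esub> k \<otimes>\<^bsub>EE\<^esub> zz (of_nat k * a)"
proof -
  interpret E: group EE by (rule E_group)
  assume u: "u \<in> carrier EE"
  have "(u \<otimes>\<^bsub>EE\<^esub> zz a) [^]\<^bsub>EE\<^esub> k = u [^]\<^bsub>EE\<^esub> k \<otimes>\<^bsub>EE\<^esub> zz a [^]\<^bsub>EE\<^esub> k"
    using u zz_central[OF u, of a] by (intro E.pow_mult_distrib) simp_all
  then show ?thesis by (simp add: zz_pow)
qed

lemma snd_zz: "u \<in> carrier EE \<Longrightarrow> snd (u \<otimes>\<^bsub>EE\<^esub> zz a) = snd u"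
  by (simp add: zz_right)

end

lemma dihedral_split:
  fixes t :: "nat \<times> bool \<Rightarrow> nat \<times> bool \<Rightarrow> rat"
  assumes ext: "extn (dihedral_group n) t" and ev: "even n" and n2: "n \<ge> 2" and cc: "c < n"
    and comm: "t (n div 2, False) (c, True) - t (c, True) (n div 2, False) \<in> \<int>"
  shows "\<exists>\<eta>. \<forall>x\<in>carrier (dihedral_group n). \<forall>y\<in>carrier (dihedral_group n). \<eta> x + \<eta> y + t x y - \<eta> (x \<otimes>\<^bsub>dihedral_group n\<^esub> y) \<in> \<int>"
proof -
  interpret extn "dihedral_group n" t by (rule ext)
  interpret E: group EE by (rule E_group)
  define r where "r = (1::nat, False)"
  define s where "s = (0::nat, True)"
  have n1: "n > 1" using n2 by simp
  have rG: "r \<in> carrier (dihedral_group n)" and sG: "s \<in> carrier (dihedral_group n)" using n1 by (simp_all add: r_def s_def dcarrier)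
  have rpowG: "r [^]\<^bsub>dihedral_group n\<^esub> k = (k mod n, False)" for k unfolding r_def by (rule rpow[OF n1])
  have oneG: "\<one>\<^bsub>dihedral_group n\<^esub> = (0, False)" by (simp add: d_one)
  have multG: "(a,b) \<otimes>\<^bsub>dihedral_group n\<^esub> (c',d) = ((if b then a + n - c' else a + c') mod n, b \<noteq> d)" for a b c' d
    by (simp add: dmult)
  define R0 where "R0 = (0::rat, r)"
  define S0 where "S0 = (0::rat, s)"
  have R0E: "R0 \<in> carrier EE" and S0E: "S0 \<in> carrier EE" using rG sG by (simp_all add: R0_def S0_def carrierE)
  have fst1: "fst \<one>\<^bsub>EE\<^esub> = 0" by (simp add: oneE)
  have lift1: "u = zz (fst u)" if "u \<in> carrier EE" "snd u = \<one>\<^bsub>dihedral_group n\<^esub>" for u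
  proof -
    have "snd u = snd \<one>\<^bsub>EE\<^esub>" by (simp add: oneE that(2))
    then have "u = \<one>\<^bsub>EE\<^esub> \<otimes>\<^bsub>EE\<^esub> zz (fst u - fst \<one>\<^bsub>EE\<^esub>)" by (rule lift_eq[OF that(1) E.one_closed])
    also have "\<dots> = zz (fst u)" by (simp add: fst1)
    finally show ?thesis .
  qed
  define \<alpha> where "\<alpha> = fst (R0 [^]\<^bsub>EE\<^esub> n)"
  have R0n: "R0 [^]\<^bsub>EE\<^esub> n = zz \<alpha>"
    unfolding \<alpha>_def by (rule lift1) (use R0E in \<open>simp_all add: snd_pow R0_def rpowG oneG\<close>)
  define R1 where "R1 = R0 \<otimes>\<^bsub>EE\<^esub> zz (- \<alpha> / of_nat n)"
  have R1E: "R1 \<in> carrier EE" using R0E by (simp add: R1_def)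
  have R1n: "R1 [^]\<^bsub>EE\<^esub> n = \<one>\<^bsub>EE\<^esub>"
    using n1 by (simp add: R1_def pz[OF R0E] R0n zz_mult zz_int)
  have sndR1: "snd R1 = r" using R0E by (simp add: R1_def snd_zz R0_def)
  define \<beta> where "\<beta> = fst (S0 \<otimes>\<^bsub>EE\<^esub> S0)"
  have S0S0: "S0 \<otimes>\<^bsub>EE\<^esub> S0 = zz \<beta>"
    unfolding \<beta>_def by (rule lift1) (use S0E in \<open>simp_all add: snd_mult S0_def s_def multG oneG\<close>)
  define S where "S = S0 \<otimes>\<^bsub>EE\<^esub> zz (- \<beta> / 2)"
  have SE: "S \<in> carrier EE" using S0E by (simp add: S_def)
  have SS: "S \<otimes>\<^bsub>EE\<^esub> S = \<one>\<^bsub>EE\<^esub>"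
    unfolding S_def using S0E by (simp add: mz S0S0 zz_mult zz_int)
  have sndS: "snd S = s" using S0E by (simp add: S_def snd_zz S0_def)
  define \<gamma> where "\<gamma> = fst (S \<otimes>\<^bsub>EE\<^esub> R1 \<otimes>\<^bsub>EE\<^esub> S \<otimes>\<^bsub>EE\<^esub> R1)"
  have hm: "(n + n - Suc 0) mod n = n - 1"
  proof -
    have "n + n - Suc 0 = (n - 1) + n" using n1 by simp
    then have "(n + n - Suc 0) mod n = (n - 1) mod n" by simp
    then show ?thesis using n1 by simp
  qed
  have hm2: "Suc (n - 1) mod n = 0" using n1 by simp
  have SRSR1: "S \<otimes>\<^bsub>EE\<^esub> R1 \<otimes>\<^bsub>EE\<^esub> S \<otimes>\<^bsub>EE\<^esub> R1 = zz \<gamma>"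
    unfolding \<gamma>_def by (rule lift1) (use SE R1E n1 in \<open>simp_all add: snd_mult sndS sndR1 s_def r_def multG oneG hm hm2\<close>)
  define m where "m = n div 2"
  have nm: "n = m + m" using ev by (auto simp: m_def elim!: evenE)
  define U where "U = R1 [^]\<^bsub>EE\<^esub> m"
  have UE: "U \<in> carrier EE" using R1E by (simp add: U_def)
  have mn: "m < n" using n1 by (simp add: m_def)
  have sndU: "snd U = (m, False)" using R1E mn by (simp add: U_def snd_pow sndR1 rpowG)
  define B where "B = (0::rat, (c, True))"
  have BE: "B \<in> carrier EE" using cc by (simp add: B_def carrierE dcarrier)
  have UB: "U \<otimes>\<^bsub>EE\<^esub> B = B \<otimes>\<^bsub>EE\<^esub> U"
  proof (rule lift_comm[OF UE BE])
    show "snd U \<otimes>\<^bsub>dihedral_group n\<^esub> snd B = snd B \<otimes>\<^bsub>dihedral_group n\<^esub> snd U"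
    proof -
      have "c + n - m = m + c" using nm by simp
      then show ?thesis by (simp add: sndU B_def multG)
    qed
    show "t (snd U) (snd B) - t (snd B) (snd U) \<in> \<int>" using comm by (simp add: sndU B_def m_def)
  qed
  define W where "W = R1 [^]\<^bsub>EE\<^esub> c \<otimes>\<^bsub>EE\<^esub> S"
  have WE: "W \<in> carrier EE" using R1E SE by (simp add: W_def)
  have WB: "W = B \<otimes>\<^bsub>EE\<^esub> zz (fst W - fst B)"
    by (rule lift_eq[OF WE BE]) (use R1E cc in \<open>simp add: W_def snd_mult snd_pow sndR1 sndS rpowG s_def B_def multG\<close>)
  have UW: "U \<otimes>\<^bsub>EE\<^esub> W = W \<otimes>\<^bsub>EE\<^esub> U"
  proof -
    have "U \<otimes>\<^bsub>EE\<^esub> W = (U \<otimes>\<^bsub>EE\<^esub> B) \<otimes>\<^bsub>EE\<^esub> zz (fst W - fst B)"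
      using UE BE by (subst WB) (simp add: E.m_assoc)
    also have "\<dots> = B \<otimes>\<^bsub>EE\<^esub> (zz (fst W - fst B) \<otimes>\<^bsub>EE\<^esub> U)"
      using UE BE zz_central[OF UE, of "fst W - fst B"] by (simp add: UB E.m_assoc)
    also have "\<dots> = W \<otimes>\<^bsub>EE\<^esub> U" using UE BE by (subst (2) WB) (simp add: E.m_assoc)
    finally show ?thesis .
  qed
  have URc: "U \<otimes>\<^bsub>EE\<^esub> R1 [^]\<^bsub>EE\<^esub> c = R1 [^]\<^bsub>EE\<^esub> c \<otimes>\<^bsub>EE\<^esub> U"
    using R1E by (simp add: U_def E.nat_pow_mult add.commute)
  have US: "U \<otimes>\<^bsub>EE\<^esub> S = S \<otimes>\<^bsub>EE\<^esub> U"
  proof -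
    have "R1 [^]\<^bsub>EE\<^esub> c \<otimes>\<^bsub>EE\<^esub> (U \<otimes>\<^bsub>EE\<^esub> S) = R1 [^]\<^bsub>EE\<^esub> c \<otimes>\<^bsub>EE\<^esub> (S \<otimes>\<^bsub>EE\<^esub> U)"
    proof -
      have "R1 [^]\<^bsub>EE\<^esub> c \<otimes>\<^bsub>EE\<^esub> (U \<otimes>\<^bsub>EE\<^esub> S) = U \<otimes>\<^bsub>EE\<^esub> W"
        using R1E UE SE by (simp add: W_def E.m_assoc[symmetric] URc)
      also have "\<dots> = W \<otimes>\<^bsub>EE\<^esub> U" by (rule UW)
      also have "\<dots> = R1 [^]\<^bsub>EE\<^esub> c \<otimes>\<^bsub>EE\<^esub> (S \<otimes>\<^bsub>EE\<^esub> U)"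
        using R1E UE SE by (simp add: W_def E.m_assoc)
      finally show ?thesis .
    qed
    then show ?thesis using R1E UE SE by simp
  qed
  (* the obstruction vanishes *)
  have SR1S: "S \<otimes>\<^bsub>EE\<^esub> R1 \<otimes>\<^bsub>EE\<^esub> S = zz \<gamma> \<otimes>\<^bsub>EE\<^esub> inv\<^bsub>EE\<^esub> R1"
  proof -
    have "S \<otimes>\<^bsub>EE\<^esub> R1 \<otimes>\<^bsub>EE\<^esub> S = (S \<otimes>\<^bsub>EE\<^esub> R1 \<otimes>\<^bsub>EE\<^esub> S \<otimes>\<^bsub>EE\<^esub> R1) \<otimes>\<^bsub>EE\<^esub> inv\<^bsub>EE\<^esub> R1"
      using SE R1E by (simp add: E.m_assoc)
    then show ?thesis by (simp add: SRSR1)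
  qed
  have "S \<otimes>\<^bsub>EE\<^esub> U \<otimes>\<^bsub>EE\<^esub> S = (zz \<gamma> \<otimes>\<^bsub>EE\<^esub> inv\<^bsub>EE\<^esub> R1) [^]\<^bsub>EE\<^esub> m"
    unfolding U_def using E.conj_pow[OF SE R1E SS, of m] SR1S by simp
  also have "\<dots> = zz (of_nat m * \<gamma>) \<otimes>\<^bsub>EE\<^esub> inv\<^bsub>EE\<^esub> U"
    using R1E zz_central[of "inv\<^bsub>EE\<^esub> R1" \<gamma>] zz_central[of "inv\<^bsub>EE\<^esub> (R1 [^]\<^bsub>EE\<^esub> m)" "of_nat m * \<gamma>"]
    by (simp add: E.pow_mult_distrib zz_pow U_def E.nat_pow_inv)
  finally have SUS: "S \<otimes>\<^bsub>EE\<^esub> U \<otimes>\<^bsub>EE\<^esub> S = zz (of_nat m * \<gamma>) \<otimes>\<^bsub>EE\<^esub> inv\<^bsub>EE\<^esub> U" .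
  have "S \<otimes>\<^bsub>EE\<^esub> U \<otimes>\<^bsub>EE\<^esub> S = U" using SE UE by (simp add: US[symmetric] E.m_assoc SS)
  then have "U \<otimes>\<^bsub>EE\<^esub> U = zz (of_nat m * \<gamma>) \<otimes>\<^bsub>EE\<^esub> inv\<^bsub>EE\<^esub> U \<otimes>\<^bsub>EE\<^esub> U" using SUS by simp
  also have "\<dots> = zz (of_nat m * \<gamma>)" using UE by (simp add: E.m_assoc)
  moreover have "U \<otimes>\<^bsub>EE\<^esub> U = R1 [^]\<^bsub>EE\<^esub> n"
    using R1E by (simp add: U_def E.nat_pow_mult nm[symmetric])
  ultimately have "zz (of_nat m * \<gamma>) = \<one>\<^bsub>EE\<^esub>" using R1n by simp
  then have obs: "of_nat m * \<gamma> \<in> \<int>" by (rule zz_eq_one)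
  define R where "R = R1 \<otimes>\<^bsub>EE\<^esub> zz (- \<gamma> / 2)"
  have RE: "R \<in> carrier EE" using R1E by (simp add: R_def)
  have sndR: "snd R = r" using R1E by (simp add: R_def snd_zz sndR1)
  have Rn: "R [^]\<^bsub>EE\<^esub> n = \<one>\<^bsub>EE\<^esub>"
  proof -
    have e: "of_nat n * (- \<gamma> / 2) = - (of_nat m * \<gamma>)" using nm by simp
    have i: "- (of_nat m * \<gamma>) \<in> \<int>" using obs by simp
    have "R [^]\<^bsub>EE\<^esub> n = R1 [^]\<^bsub>EE\<^esub> n \<otimes>\<^bsub>EE\<^esub> zz (of_nat n * (- \<gamma> / 2))"
      unfolding R_def by (rule pz[OF R1E])
    also have "\<dots> = \<one>\<^bsub>EE\<^esub>" unfolding e zz_int[OF i] R1n by simp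
    finally show ?thesis .
  qed
  have Sz: "S = S \<otimes>\<^bsub>EE\<^esub> zz 0" using SE by (simp add: zz_int)
  have SRSR: "S \<otimes>\<^bsub>EE\<^esub> R \<otimes>\<^bsub>EE\<^esub> S \<otimes>\<^bsub>EE\<^esub> R = \<one>\<^bsub>EE\<^esub>"
  proof -
    have a1: "S \<otimes>\<^bsub>EE\<^esub> R = (S \<otimes>\<^bsub>EE\<^esub> R1) \<otimes>\<^bsub>EE\<^esub> zz (- \<gamma> / 2)"
      unfolding R_def using mz[OF SE R1E, of 0 "- \<gamma> / 2"] Sz by simp
    have a2: "S \<otimes>\<^bsub>EE\<^esub> R \<otimes>\<^bsub>EE\<^esub> S = (S \<otimes>\<^bsub>EE\<^esub> R1 \<otimes>\<^bsub>EE\<^esub> S) \<otimes>\<^bsub>EE\<^esub> zz (- \<gamma> / 2)"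
      unfolding a1 using mz[of "S \<otimes>\<^bsub>EE\<^esub> R1" S "- \<gamma> / 2" 0] Sz SE R1E by simp
    have "S \<otimes>\<^bsub>EE\<^esub> R \<otimes>\<^bsub>EE\<^esub> S \<otimes>\<^bsub>EE\<^esub> R = ((S \<otimes>\<^bsub>EE\<^esub> R1 \<otimes>\<^bsub>EE\<^esub> S) \<otimes>\<^bsub>EE\<^esub> zz (- \<gamma> / 2)) \<otimes>\<^bsub>EE\<^esub> R"
      by (simp only: a2)
    also have "\<dots> = (S \<otimes>\<^bsub>EE\<^esub> R1 \<otimes>\<^bsub>EE\<^esub> S \<otimes>\<^bsub>EE\<^esub> R1) \<otimes>\<^bsub>EE\<^esub> zz (- \<gamma> / 2 + - \<gamma> / 2)"
      unfolding R_def by (rule mz) (use SE R1E in simp_all)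
    finally have "S \<otimes>\<^bsub>EE\<^esub> R \<otimes>\<^bsub>EE\<^esub> S \<otimes>\<^bsub>EE\<^esub> R = (S \<otimes>\<^bsub>EE\<^esub> R1 \<otimes>\<^bsub>EE\<^esub> S \<otimes>\<^bsub>EE\<^esub> R1) \<otimes>\<^bsub>EE\<^esub> zz (- \<gamma> / 2 + - \<gamma> / 2)" .
    then show ?thesis by (simp add: SRSR1 zz_mult zz_int)
  qed
  define \<sigma> where "\<sigma> = (\<lambda>(a,b). if b then R [^]\<^bsub>EE\<^esub> a \<otimes>\<^bsub>EE\<^esub> S else R [^]\<^bsub>EE\<^esub> (a::nat))"
  have \<sigma>E: "\<sigma> x \<in> carrier EE" for x using RE SE by (cases x) (simp add: \<sigma>_def)
  have snd\<sigma>: "snd (\<sigma> x) = x" if xG: "x \<in> carrier (dihedral_group n)" for x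
  proof -
    obtain a b where x: "x = (a,b)" "a < n" using xG by (cases x) (auto simp: dcarrier)
    show ?thesis using x RE by (cases b) (simp_all add: \<sigma>_def snd_mult snd_pow sndR sndS rpowG s_def multG)
  qed
  have hom: "\<sigma> (x \<otimes>\<^bsub>dihedral_group n\<^esub> y) = \<sigma> x \<otimes>\<^bsub>EE\<^esub> \<sigma> y" if "x \<in> carrier (dihedral_group n)" "y \<in> carrier (dihedral_group n)" for x y
    unfolding \<sigma>_def using E.dihedral_hom[OF _ RE SE Rn SS SRSR, of x y] that n1 by simp
  show ?thesis
  proof (intro exI ballI)
    fix x y assume xy: "x \<in> carrier (dihedral_group n)" "y \<in> carrier (dihedral_group n)"
    have "fst (\<sigma> (x \<otimes>\<^bsub>dihedral_group n\<^esub> y)) = frac (fst (\<sigma> x) + fst (\<sigma> y) + t x y)"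
      using hom[OF xy] snd\<sigma>[OF xy(1)] snd\<sigma>[OF xy(2)] by (simp add: multE)
    then show "fst (\<sigma> x) + fst (\<sigma> y) + t x y - fst (\<sigma> (x \<otimes>\<^bsub>dihedral_group n\<^esub> y)) \<in> \<int>"
      by (simp add: frac_def)
  qed
qed



lemma rot3: "a < n \<Longrightarrow> ((a + a) mod n + a) mod (n::nat) = a \<Longrightarrow> a = 0 \<or> a + a = n"
  by (auto simp: mod_if split: if_splits)

lemma H_facts:
  fixes n :: nat and H :: "(nat \<times> bool) set"
  assumes n0: "n > 0"
    and sub: "subgroup H (dihedral_group n)"
    and iso: "\<exists>m>0. (dihedral_group n)\<lparr>carrier := H\<rparr> \<cong> dihedral_group m"
    and idx: "card (rcosets\<^bsub>dihedral_group n\<^esub> H) = 2"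
    and four: "4 dvd card H"
  shows "card H = n" and "4 dvd n" and "(n div 2, False) \<in> H" and "\<exists>c<n. (c, True) \<in> H"
proof -
  let ?G = "dihedral_group n"
  interpret G: group ?G by (rule dgroup[OF n0])
  interpret Hs: subgroup H ?G by (rule sub)
  have cardG: "order ?G = 2 * n" by (simp add: order_def dcarrier)
  show cH: "card H = n" using G.lagrange[OF sub] idx cardG by simp
  then show n4: "4 dvd n" using four by simp
  then have n4': "n \<ge> 4" using n0 by (auto elim!: dvdE)
  define r where "r = (1::nat, False)"
  have rG: "r \<in> carrier ?G" using n4' by (simp add: r_def dcarrier)
  have HG: "H \<subseteq> carrier ?G" by (rule Hs.subset)
  have fin: "finite (carrier ?G)" by (simp add: dcarrier)
  have rr: "r \<otimes>\<^bsub>?G\<^esub> r = (2, False)" using n4' by (simp add: r_def dmult)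
  have twoH: "(2, False) \<in> H"
  proof (rule ccontr)
    assume n2: "(2, False) \<notin> H"
    have rn: "r \<notin> H" using n2 rr Hs.m_closed[of r r] by auto
    have ne: "H #>\<^bsub>?G\<^esub> x \<noteq> H" if "x \<in> carrier ?G" "x \<notin> H" for x
      using G.rcos_self[OF that(1) sub] that(2) by blast
    have rrG: "r \<otimes>\<^bsub>?G\<^esub> r \<in> carrier ?G" using rG by simp
    show False
    proof (cases "H #>\<^bsub>?G\<^esub> r = H #>\<^bsub>?G\<^esub> (r \<otimes>\<^bsub>?G\<^esub> r)")
      case True
      then have "r \<otimes>\<^bsub>?G\<^esub> r \<in> H #>\<^bsub>?G\<^esub> r" using G.repr_independenceD[OF sub rrG] by simp
      then obtain h where h: "h \<in> H" "r \<otimes>\<^bsub>?G\<^esub> r = h \<otimes>\<^bsub>?G\<^esub> r" by (auto simp: r_coset_def)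
      then have "r = h" using rG HG by (metis G.r_cancel subsetD)
      then show False using h rn by simp
    next
      case False
      have sub3: "{H, H #>\<^bsub>?G\<^esub> r, H #>\<^bsub>?G\<^esub> (r \<otimes>\<^bsub>?G\<^esub> r)} \<subseteq> rcosets\<^bsub>?G\<^esub> H"
        using G.rcosetsI[OF HG rG] G.rcosetsI[OF HG rrG] G.rcosetsI[OF HG G.one_closed] HG by simp
      have "finite (rcosets\<^bsub>?G\<^esub> H)" using fin by (simp add: RCOSETS_def)
      then have "card {H, H #>\<^bsub>?G\<^esub> r, H #>\<^bsub>?G\<^esub> (r \<otimes>\<^bsub>?G\<^esub> r)} \<le> 2"
        using card_mono[OF _ sub3] idx by simp
      moreover have "card {H, H #>\<^bsub>?G\<^esub> r, H #>\<^bsub>?G\<^esub> (r \<otimes>\<^bsub>?G\<^esub> r)} = 3"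
        using False ne[OF rG rn] ne[OF rrG] n2 rr by auto
      ultimately show False by simp
    qed
  qed
  have evH: "(2 * j mod n, False) \<in> H" for j
  proof (induction j)
    case 0 then show ?case using Hs.one_closed by (simp add: d_one)
  next
    case (Suc j)
    have "(2 * j mod n, False) \<otimes>\<^bsub>?G\<^esub> (2, False) \<in> H" using Suc twoH by (rule Hs.m_closed)
    moreover have "(2 * j mod n, False) \<otimes>\<^bsub>?G\<^esub> (2, False) = (2 * Suc j mod n, False)"
      by (simp add: dmult mod_Suc_Suc_eq)
    ultimately show ?case by simp
  qed
  have "2 * (n div 4) = n div 2" using n4 by (auto elim!: dvdE)
  moreover have "n div 2 < n" using n0 by simp
  ultimately show "(n div 2, False) \<in> H" using evH[of "n div 4"] by simp
  show "\<exists>c<n. (c, True) \<in> H"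
  proof (rule ccontr)
    assume nr: "\<not> (\<exists>c<n. (c, True) \<in> H)"
    have rot: "x \<in> H \<Longrightarrow> snd x = False" for x using nr HG by (cases x) (auto simp: dcarrier)
    obtain m where m0: "m > 0" and isoK: "?G\<lparr>carrier := H\<rparr> \<cong> dihedral_group m" using iso by blast
    interpret K: group "?G\<lparr>carrier := H\<rparr>" by (rule Hs.subgroup_is_group[OF G.is_group])
    obtain \<psi> where \<psi>: "\<psi> \<in> iso (dihedral_group m) (?G\<lparr>carrier := H\<rparr>)"
      using K.iso_sym[OF isoK] unfolding is_iso_def by blast
    have bij: "bij_betw \<psi> (carrier (dihedral_group m)) H" using \<psi> by (simp add: iso_def)
    have hom: "\<psi> (x \<otimes>\<^bsub>dihedral_group m\<^esub> y) = \<psi> x \<otimes>\<^bsub>?G\<^esub> \<psi> y"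
      if "x \<in> carrier (dihedral_group m)" "y \<in> carrier (dihedral_group m)" for x y
      using \<psi> that by (simp add: iso_def hom_def)
    have "card (carrier (dihedral_group m)) = card H" using bij by (rule bij_betw_same_card)
    then have "2 * m = n" using cH by (simp add: dcarrier card_cartesian_product)
    then have m2: "m \<ge> 2" using n4' by simp
    define A where "A = {(0::nat, False), (0, True), (1, True)}"
    have AD: "A \<subseteq> carrier (dihedral_group m)" using m2 by (auto simp: A_def dcarrier)
    have cA: "card A = 3" by (simp add: A_def)
    have inv3: "x \<otimes>\<^bsub>dihedral_group m\<^esub> x \<otimes>\<^bsub>dihedral_group m\<^esub> x = x" if "x \<in> A" for x
      using that m2 by (auto simp: A_def dmult)
    have img: "\<psi> ` A \<subseteq> {(0, False), (n div 2, False)}"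
    proof
      fix y assume "y \<in> \<psi> ` A"
      then obtain x where x: "x \<in> A" "y = \<psi> x" by blast
      have xD: "x \<in> carrier (dihedral_group m)" using x AD by blast
      have yH: "y \<in> H" using x(2) xD bij by (auto simp: bij_betw_def)
      interpret Dm: group "dihedral_group m" by (rule dgroup[OF m0])
      have xx: "x \<otimes>\<^bsub>dihedral_group m\<^esub> x \<in> carrier (dihedral_group m)" using xD by simp
      have "y \<otimes>\<^bsub>?G\<^esub> y \<otimes>\<^bsub>?G\<^esub> y = \<psi> (x \<otimes>\<^bsub>dihedral_group m\<^esub> x \<otimes>\<^bsub>dihedral_group m\<^esub> x)"
        unfolding hom[OF xx xD] hom[OF xD xD] x(2) ..
      also have "\<dots> = y" using inv3[OF x(1)] x(2) by simp
      finally have yyy: "y \<otimes>\<^bsub>?G\<^esub> y \<otimes>\<^bsub>?G\<^esub> y = y" .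
      define a where "a = fst y"
      have ya: "y = (a, False)" "a < n" using yH rot[OF yH] HG by (auto simp: a_def prod_eq_iff dcarrier)
      have "((a + a) mod n + a) mod n = a" using yyy unfolding ya(1) by (simp add: dmult)
      then have "a = 0 \<or> a + a = n" using rot3 ya(2) by blast
      then show "y \<in> {(0, False), (n div 2, False)}" using ya by auto
    qed
    have "inj_on \<psi> A" using bij AD unfolding bij_betw_def by (rule inj_on_subset[OF conjunct1])
    then have "card (\<psi> ` A) = 3" using cA by (simp add: card_image)
    moreover have "card (\<psi> ` A) \<le> 2"
    proof -
      have "card (\<psi> ` A) \<le> card {(0::nat,False),(n div 2,False)}" by (rule card_mono[OF _ img]) simp
      also have "\<dots> \<le> 2" by (simp add: card_insert_if)
      finally show ?thesis .
    qed
    ultimately show False by simp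
  qed
qed



lemma list3: "set xs \<subseteq> A \<Longrightarrow> length xs = 3 \<Longrightarrow> \<exists>x y z. xs = [x,y,z] \<and> x \<in> A \<and> y \<in> A \<and> z \<in> A"
  by (cases xs rule: list.exhaust; simp; rename_tac a xs'; case_tac xs' rule: list.exhaust; simp;
      rename_tac b ys; case_tac ys rule: list.exhaust; simp; rename_tac c zs; case_tac zs; simp)

theorem lemma2p2:
  fixes n :: nat and H :: "(nat \<times> bool) set"
  assumes "even n" and "n > 0"
    and "subgroup H (dihedral_group n)"
    and "\<exists>m>0. (dihedral_group n)\<lparr>carrier := H\<rparr> \<cong> dihedral_group m"
    and "card (rcosets\<^bsub>dihedral_group n\<^esub> H) = 2"
    and "4 dvd card H"
  shows "\<forall>f g. cocycle (dihedral_group n) 3 f \<and> cocycle (dihedral_group n) 3 g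
           \<and> cohomologous ((dihedral_group n)\<lparr>carrier := H\<rparr>) 2 f g
           \<longrightarrow> cohomologous (dihedral_group n) 2 f g"
proof (intro allI impI)
  fix f g :: "(nat \<times> bool) list \<Rightarrow> int"
  assume fg: "cocycle (dihedral_group n) 3 f \<and> cocycle (dihedral_group n) 3 g
           \<and> cohomologous ((dihedral_group n)\<lparr>carrier := H\<rparr>) 2 f g"
  let ?G = "dihedral_group n"
  let ?K = "?G\<lparr>carrier := H\<rparr>"
  interpret G: group ?G by (rule dgroup[OF assms(2)])
  interpret Hs: subgroup H ?G by (rule assms(3))
  have n4: "4 dvd n" and aH: "(n div 2, False) \<in> H" and refl: "\<exists>c<n. (c, True) \<in> H"
    using H_facts[OF assms(2-6)] by auto
  obtain c0 where c0: "c0 < n" "(c0, True) \<in> H" using refl by blast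
  have n2: "n \<ge> 2" using n4 assms(2) by (auto elim!: dvdE)
  define \<phi> where "\<phi> xs = f xs - g xs" for xs
  have coc: "\<phi> [x,y,z] - \<phi> [w \<otimes>\<^bsub>?G\<^esub> x,y,z] + \<phi> [w, x \<otimes>\<^bsub>?G\<^esub> y, z] - \<phi> [w,x,y \<otimes>\<^bsub>?G\<^esub> z] + \<phi> [w,x,y] = 0"
    if "w \<in> carrier ?G" "x \<in> carrier ?G" "y \<in> carrier ?G" "z \<in> carrier ?G" for w x y z
  proof -
    have "cobdry ?G 3 f [w,x,y,z] = 0" "cobdry ?G 3 g [w,x,y,z] = 0"
      using fg that unfolding cocycle_def by (auto simp: numeral_3_eq_3)
    then show ?thesis unfolding cob3 \<phi>_def by simp
  qed
  define \<theta> where "\<theta> xs = - (\<Sum>g\<in>carrier ?G. (of_int (\<phi> (xs @ [g])) :: rat)) / of_nat (card (carrier ?G))" for xs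
  have fin: "finite (carrier ?G)" by (simp add: dcarrier)
  have thd: "\<theta> [y,z] - \<theta> [x \<otimes>\<^bsub>?G\<^esub> y,z] + \<theta> [x, y \<otimes>\<^bsub>?G\<^esub> z] - \<theta> [x,y] = of_int (\<phi> [x,y,z])"
    if "x \<in> carrier ?G" "y \<in> carrier ?G" "z \<in> carrier ?G" for x y z
    by (rule avg3[OF G.is_group fin coc \<theta>_def that])
  define e where "e = \<one>\<^bsub>?G\<^esub>"
  define t where "t x y = \<theta> [x,y] - \<theta> [e,e]" for x y
  have ext: "extn ?G t"
  proof (rule extn.intro)
    show "group ?G" by (rule G.is_group)
    show "t \<one>\<^bsub>?G\<^esub> y \<in> \<int>" if "y \<in> carrier ?G" for y
      using thd[OF G.one_closed G.one_closed that] that by (simp add: t_def e_def)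
    show "t x \<one>\<^bsub>?G\<^esub> \<in> \<int>" if "x \<in> carrier ?G" for x
    proof -
      have "\<theta> [e,e] - \<theta> [x,e] \<in> \<int>" using thd[OF that G.one_closed G.one_closed] that by (simp add: e_def)
      then have "- (\<theta> [e,e] - \<theta> [x,e]) \<in> \<int>" by (rule Ints_minus)
      then show ?thesis by (simp add: t_def e_def)
    qed
    show "t x y + t (x \<otimes>\<^bsub>?G\<^esub> y) z - t y z - t x (y \<otimes>\<^bsub>?G\<^esub> z) \<in> \<int>"
      if "x \<in> carrier ?G" "y \<in> carrier ?G" "z \<in> carrier ?G" for x y z
    proof -
      have "t x y + t (x \<otimes>\<^bsub>?G\<^esub> y) z - t y z - t x (y \<otimes>\<^bsub>?G\<^esub> z) = - of_int (\<phi> [x,y,z])"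
        using thd[OF that] by (simp add: t_def)
      then show ?thesis by simp
    qed
  qed
  obtain k where k: "\<And>xs. set xs \<subseteq> H \<Longrightarrow> length xs = 3 \<Longrightarrow> f xs - g xs = cobdry ?K 2 k xs"
    using fg unfolding cohomologous_def is_coboundary_def by (auto simp: numeral_3_eq_3)
  interpret K: group ?K by (rule Hs.subgroup_is_group[OF G.is_group])
  have finH: "finite H" using fin Hs.subset finite_subset by blast
  define cc where "cc xs = \<theta> xs - of_int (k xs)" for xs
  have ccoc: "cc [y,z] - cc [x \<otimes>\<^bsub>?K\<^esub> y,z] + cc [x, y \<otimes>\<^bsub>?K\<^esub> z] - cc [x,y] = 0"
    if "x \<in> carrier ?K" "y \<in> carrier ?K" "z \<in> carrier ?K" for x y z
  proof -
    have xyz: "x \<in> carrier ?G" "y \<in> carrier ?G" "z \<in> carrier ?G" using that Hs.subset by auto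
    have "\<phi> [x,y,z] = cobdry ?K 2 k [x,y,z]" using k[of "[x,y,z]"] that by (simp add: \<phi>_def)
    then have "\<phi> [x,y,z] = k [y,z] - k [x \<otimes>\<^bsub>?G\<^esub> y, z] + k [x, y \<otimes>\<^bsub>?G\<^esub> z] - k [x,y]"
      by (simp add: cob2)
    then show ?thesis using thd[OF xyz] by (simp add: cc_def)
  qed
  have ab: "(n div 2, False) \<otimes>\<^bsub>?G\<^esub> (c0, True) = (c0, True) \<otimes>\<^bsub>?G\<^esub> (n div 2, False)"
  proof -
    have "c0 + n - n div 2 = n div 2 + c0" using assms(1) by (auto elim!: evenE)
    then show ?thesis by (simp add: dmult)
  qed
  have "cc [(n div 2, False), (c0, True)] = cc [(c0, True), (n div 2, False)]"
    by (rule avg2[OF K.is_group _ ccoc]) (use finH aH c0 ab in simp_all)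
  then have "t (n div 2, False) (c0, True) - t (c0, True) (n div 2, False)
      = of_int (k [(n div 2, False), (c0, True)] - k [(c0, True), (n div 2, False)])"
    by (simp add: cc_def t_def)
  then have comm: "t (n div 2, False) (c0, True) - t (c0, True) (n div 2, False) \<in> \<int>" by simp
  obtain \<eta>' where \<eta>': "\<And>x y. x \<in> carrier ?G \<Longrightarrow> y \<in> carrier ?G \<Longrightarrow> \<eta>' x + \<eta>' y + t x y - \<eta>' (x \<otimes>\<^bsub>?G\<^esub> y) \<in> \<int>"
    using dihedral_split[OF ext assms(1) n2 c0(1) comm] by blast
  define \<eta> where "\<eta> x = \<theta> [e,e] - \<eta>' x" for x
  define D where "D xs = \<eta> (xs ! 1) - \<eta> ((xs ! 0) \<otimes>\<^bsub>?G\<^esub> (xs ! 1)) + \<eta> (xs ! 0)" for xs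
  define h where "h xs = floor (\<theta> xs - D xs)" for xs
  have hint: "of_int (h [x,y]) = \<theta> [x,y] - D [x,y]" if "x \<in> carrier ?G" "y \<in> carrier ?G" for x y
  proof -
    have "\<theta> [x,y] - D [x,y] = \<eta>' x + \<eta>' y + t x y - \<eta>' (x \<otimes>\<^bsub>?G\<^esub> y)"
      by (simp add: D_def \<eta>_def t_def)
    then have "\<theta> [x,y] - D [x,y] \<in> \<int>" using \<eta>'[OF that] by simp
    then show ?thesis by (simp add: h_def)
  qed
  show "cohomologous ?G 2 f g"
    unfolding cohomologous_def is_coboundary_def
  proof (intro exI allI impI)
    fix xs assume xs: "set xs \<subseteq> carrier ?G \<and> length xs = Suc 2"
    then obtain x y z where xyz: "xs = [x,y,z]" "x \<in> carrier ?G" "y \<in> carrier ?G" "z \<in> carrier ?G"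
      using list3[of xs "carrier ?G"] by auto
    have "(of_int (cobdry ?G 2 h xs) :: rat) = of_int (h [y,z]) - of_int (h [x \<otimes>\<^bsub>?G\<^esub> y, z]) + of_int (h [x, y \<otimes>\<^bsub>?G\<^esub> z]) - of_int (h [x,y])"
      by (simp add: xyz cob2)
    also have "\<dots> = (\<theta> [y,z] - \<theta> [x \<otimes>\<^bsub>?G\<^esub> y,z] + \<theta> [x, y \<otimes>\<^bsub>?G\<^esub> z] - \<theta> [x,y])
        - (D [y,z] - D [x \<otimes>\<^bsub>?G\<^esub> y,z] + D [x, y \<otimes>\<^bsub>?G\<^esub> z] - D [x,y])"
      using xyz by (simp add: hint)
    also have "D [y,z] - D [x \<otimes>\<^bsub>?G\<^esub> y,z] + D [x, y \<otimes>\<^bsub>?G\<^esub> z] - D [x,y] = 0"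
      using xyz by (simp add: D_def G.m_assoc)
    also have "\<theta> [y,z] - \<theta> [x \<otimes>\<^bsub>?G\<^esub> y,z] + \<theta> [x, y \<otimes>\<^bsub>?G\<^esub> z] - \<theta> [x,y] = of_int (\<phi> [x,y,z])"
      by (rule thd[OF xyz(2-4)])
    finally have "\<phi> [x,y,z] = cobdry ?G 2 h xs" by simp
    then show "f xs - g xs = cobdry ?G 2 h xs" by (simp add: \<phi>_def xyz)
  qed
qed


end
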